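(* Let $L$ be a positive integer and $U>0$ with $L>\frac{8}{U}$, and let $N=2$. Consider the Lieb-Wu equations with one down spin in the unknowns $k_1,k_2$ and real $\Lambda$: $$e^{i k_j L} = \frac{\Lambda - \sin k_j - iU/4}{\Lambda - \sin k_j + iU/4},\quad j=1,2,\qquad \prod_{j=1}^2 \frac{\Lambda - \sin k_j - iU/4}{\Lambda - \sin k_j + iU/4} = 1.$$ Call a solution a $k$-$\Lambda$ two-string if $k_1 = q - i\xi$, $k_2 = q+i\xi$ with $q$ real (taken modulo $2\pi$, i.e. $q\in[0,2\pi)$) and $\xi>0$. Then such $k$-$\Lambda$ two-string solutions exist only if $\frac{\pi}{2} < q < \frac{3\pi}{2}$. The allowed values of $q$ in that range are quantized as $q = m\frac{\pi}{L}$ with $m$ an integer. For every $q = m\frac{\pi}{L}$ with $\frac{\pi}{2}<q<\frac{3\pi}{2}$ there is one and only one $k$-$\Lambda$ two-string. The total number of $k$-$\Lambda$ two-strings is $L$ if $L$ is odd and $L-1$ if $L$ is even.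
   Context: Here $k_1,k_2$ are complex numbers determined modulo $2\pi$; solutions are counted modulo permutation of $k_1,k_2$. *)

theory Defs
  imports Complex_Main
begin

definition LW_factor :: "real \<Rightarrow> real \<Rightarrow> complex \<Rightarrow> complex" where
  "LW_factor U Lam k =
     (complex_of_real Lam - sin k - \<i> * complex_of_real U / 4) /
     (complex_of_real Lam - sin k + \<i> * complex_of_real U / 4)"

definition lieb_wu2 :: "nat \<Rightarrow> real \<Rightarrow> complex \<Rightarrow> complex \<Rightarrow> real \<Rightarrow> bool" where
  "lieb_wu2 L U k1 k2 Lam \<longleftrightarrow>
     exp (\<i> * k1 * of_nat L) = LW_factor U Lam k1 \<and>
     exp (\<i> * k2 * of_nat L) = LW_factor U Lam k2 \<and>
     LW_factor U Lam k1 * LW_factor U Lam k2 = 1"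

text \<open>k-Lambda two-strings: k1 = q - i xi, k2 = q + i xi, q in [0, 2 pi), xi > 0, Lambda real.
  Such a solution is recorded by the triple (q, xi, Lambda); this fixes the order of k1, k2,
  so solutions are counted modulo permutation.\<close>
definition two_strings :: "nat \<Rightarrow> real \<Rightarrow> (real \<times> real \<times> real) set" where
  "two_strings L U = {(q, xi, Lam). 0 \<le> q \<and> q < 2 * pi \<and> xi > 0 \<and>
      lieb_wu2 L U (complex_of_real q - \<i> * complex_of_real xi)
                   (complex_of_real q + \<i> * complex_of_real xi) Lam}"

end

theory Submission
  imports Defs "HOL-Analysis.Analysis"
begin


lemma sin_k1: "sin (complex_of_real q - \<i> * complex_of_real x) = Complex (sin q * cosh x) (- (cos q * sinh x))"
  by (simp add: complex_eq_iff Re_sin Im_sin sinh_field_def cosh_field_def field_simps)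
lemma sin_k2: "sin (complex_of_real q + \<i> * complex_of_real x) = Complex (sin q * cosh x) (cos q * sinh x)"
  by (simp add: complex_eq_iff Re_sin Im_sin sinh_field_def cosh_field_def field_simps)
lemma exp_k1: "exp (\<i> * (complex_of_real q - \<i> * complex_of_real x) * of_nat L) = Complex (exp (x*L) * cos (q*L)) (exp (x*L) * sin (q*L))"
proof -
  have "\<i> * (complex_of_real q - \<i> * complex_of_real x) * of_nat L = Complex (x*L) (q*L)"
    by (simp add: complex_eq_iff)
  then show ?thesis by (simp add: complex_eq_iff Re_exp Im_exp)
qed
lemma exp_k2: "exp (\<i> * (complex_of_real q + \<i> * complex_of_real x) * of_nat L) = Complex (cos (q*L) / exp (x*L)) (sin (q*L) / exp (x*L))"
proof -
  have "\<i> * (complex_of_real q + \<i> * complex_of_real x) * of_nat L = Complex (-(x*L)) (q*L)"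
    by (simp add: complex_eq_iff)
  then show ?thesis by (simp add: complex_eq_iff Re_exp Im_exp exp_minus field_simps)
qed

lemma LW1: "LW_factor U Lam (complex_of_real q - \<i> * complex_of_real x) =
   Complex (Lam - sin q * cosh x) (cos q * sinh x - U/4) / Complex (Lam - sin q * cosh x) (cos q * sinh x + U/4)"
proof -
  have n: "complex_of_real Lam - sin (complex_of_real q - \<i> * complex_of_real x) - \<i> * complex_of_real U / 4
     = Complex (Lam - sin q * cosh x) (cos q * sinh x - U/4)"
    by (simp add: sin_k1 complex_eq_iff)
  have d: "complex_of_real Lam - sin (complex_of_real q - \<i> * complex_of_real x) + \<i> * complex_of_real U / 4
     = Complex (Lam - sin q * cosh x) (cos q * sinh x + U/4)"
    by (simp add: sin_k1 complex_eq_iff)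
  show ?thesis unfolding LW_factor_def n d ..
qed

lemma LW2: "LW_factor U Lam (complex_of_real q + \<i> * complex_of_real x) =
   Complex (Lam - sin q * cosh x) (- cos q * sinh x - U/4) / Complex (Lam - sin q * cosh x) (U/4 - cos q * sinh x)"
proof -
  have n: "complex_of_real Lam - sin (complex_of_real q + \<i> * complex_of_real x) - \<i> * complex_of_real U / 4
     = Complex (Lam - sin q * cosh x) (- cos q * sinh x - U/4)"
    by (simp add: sin_k2 complex_eq_iff)
  have d: "complex_of_real Lam - sin (complex_of_real q + \<i> * complex_of_real x) + \<i> * complex_of_real U / 4
     = Complex (Lam - sin q * cosh x) (U/4 - cos q * sinh x)"
    by (simp add: sin_k2 complex_eq_iff)
  show ?thesis unfolding LW_factor_def n d ..
qed

lemma char: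
  assumes x: "x > 0" and U: "U > 0" and L: "L > 0"
  shows "lieb_wu2 L U (complex_of_real q - \<i> * complex_of_real x) (complex_of_real q + \<i> * complex_of_real x) Lam
    \<longleftrightarrow> sin (q*L) = 0 \<and> Lam = sin q * cosh x \<and>
        cos q * sinh x * (1 - cos (q*L) * exp (x*L)) = U/4 * (1 + cos (q*L) * exp (x*L))"
  (is "?lhs \<longleftrightarrow> ?rhs")
proof -
  define a where "a = Lam - sin q * cosh x"
  define b where "b = cos q * sinh x"
  define u where "u = U/4"
  define P where "P = exp (x*L)"
  define C where "C = cos (q*L)"
  define S where "S = sin (q*L)"
  have P1: "P > 1" unfolding P_def using x L by simp
  have CS: "C^2 + S^2 = 1" unfolding C_def S_def by simp
  have u0: "u > 0" unfolding u_def using U by simp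
  have e1: "exp (\<i> * (complex_of_real q - \<i> * complex_of_real x) * of_nat L) = Complex (P*C) (P*S)"
    unfolding exp_k1 P_def C_def S_def ..
  have e2: "exp (\<i> * (complex_of_real q + \<i> * complex_of_real x) * of_nat L) = Complex (C/P) (S/P)"
    unfolding exp_k2 P_def C_def S_def ..
  have F1: "LW_factor U Lam (complex_of_real q - \<i> * complex_of_real x) = Complex a (b - u) / Complex a (b + u)"
    unfolding LW1 a_def b_def u_def ..
  have F2: "LW_factor U Lam (complex_of_real q + \<i> * complex_of_real x) = Complex a (-b - u) / Complex a (u - b)"
    unfolding LW2 a_def b_def u_def by simp
  show ?thesis
  proof
    assume ?lhs
    then have E1: "Complex (P*C) (P*S) = Complex a (b - u) / Complex a (b + u)"
      and E3: "Complex (P*C) (P*S) * Complex (C/P) (S/P) = 1"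
      unfolding lieb_wu2_def e1 e2 F1 F2 by auto
    have D: "Complex a (b + u) \<noteq> 0"
    proof
      assume "Complex a (b + u) = 0"
      with E1 have "Complex (P*C) (P*S) = 0" by simp
      then have "C = 0 \<and> S = 0" using P1 by (simp add: complex_eq_iff)
      with CS show False by simp
    qed
    from E1 D have "Complex (P*C) (P*S) * Complex a (b + u) = Complex a (b - u)"
      by (simp add: eq_divide_eq)
    then have R1: "P*C*a - P*S*(b+u) = a" and I1: "P*C*(b+u) + P*S*a = b - u"
      by (simp_all add: complex_eq_iff algebra_simps)
    from E3 have "C*C - S*S = 1" using P1 by (simp add: complex_eq_iff field_simps)
    with CS have "S*S = 0" unfolding power2_eq_square by linarith
    then have S0: "S = 0" by simp
    with CS have "(C-1)*(C+1) = 0" by (simp add: power2_eq_square algebra_simps)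
    then have C1: "C = 1 \<or> C = -1" by (smt (verit) mult_eq_0_iff)
    have "P*C \<noteq> 1" using C1 P1 by auto
    have "a * (P*C - 1) = 0" using R1 S0 by (simp add: algebra_simps)
    with \<open>P*C \<noteq> 1\<close> have a0: "a = 0" by simp
    from I1 S0 have "b * (1 - C*P) = u * (1 + C*P)" by (simp add: algebra_simps)
    with a0 S0 show ?rhs unfolding a_def b_def u_def P_def C_def S_def by simp
  next
    assume ?rhs
    then have S0: "S = 0" and a0: "a = 0" and eq: "b * (1 - C*P) = u * (1 + C*P)"
      unfolding a_def b_def u_def P_def C_def S_def by auto
    with CS have "(C-1)*(C+1) = 0" by (simp add: power2_eq_square algebra_simps)
    then have C1: "C = 1 \<or> C = -1" by (smt (verit) mult_eq_0_iff)
    have bu1: "b + u \<noteq> 0"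
    proof
      assume "b + u = 0" then have "b = -u" by simp
      with eq u0 show False by (simp add: algebra_simps)
    qed
    have bu2: "u - b \<noteq> 0"
    proof
      assume "u - b = 0" then have "b = u" by simp
      with eq u0 P1 C1 show False by (auto simp add: algebra_simps)
    qed
    have i1: "P*C*(b+u) = b - u" using eq by (simp add: algebra_simps)
    have i2: "C*(u-b) = -P*(b+u)"
    proof -
      have "C*(P*C*(b+u)) = C*(b-u)" using i1 by simp
      then show ?thesis using C1 by (auto simp add: algebra_simps)
    qed
    have D1: "Complex a (b+u) \<noteq> 0" using bu1 by (simp add: complex_eq_iff)
    have D2: "Complex a (u-b) \<noteq> 0" using bu2 by (simp add: complex_eq_iff)
    have "Complex (P*C) (P*S) * Complex a (b + u) = Complex a (b - u)"
      using a0 S0 i1 by (simp add: complex_eq_iff)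
    then have G1: "Complex (P*C) (P*S) = Complex a (b - u) / Complex a (b + u)"
      using D1 by (simp add: eq_divide_eq)
    have "Complex (C/P) (S/P) * Complex a (u - b) = Complex a (-b - u)"
      using a0 S0 i2 P1 by (simp add: complex_eq_iff field_simps)
    then have G2: "Complex (C/P) (S/P) = Complex a (-b - u) / Complex a (u - b)"
      using D2 by (simp add: eq_divide_eq)
    have G3: "Complex (P*C) (P*S) * Complex (C/P) (S/P) = 1"
      using S0 C1 P1 by (auto simp add: complex_eq_iff)
    show ?lhs unfolding lieb_wu2_def e1 e2 F1 F2 using G1 G2 G3 by simp
  qed
qed


lemma sinh_nat_ge: "(x::real) \<ge> 0 \<Longrightarrow> sinh (real n * x) \<ge> real n * sinh x"
proof (induction n)
  case 0 then show ?case by simp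
next
  case (Suc n)
  have "sinh (real (Suc n) * x) = sinh (real n * x) * cosh x + cosh (real n * x) * sinh x"
    by (simp add: distrib_right sinh_add)
  also have "\<dots> \<ge> real n * sinh x * 1 + 1 * sinh x"
    apply (rule add_mono)
     apply (rule mult_mono) using Suc cosh_real_ge_1[of x] apply auto[4]
    apply (rule mult_right_mono) using Suc cosh_real_ge_1 apply auto
    done
  finally show ?case by (simp add: distrib_right)
qed

lemma sinh_ge_half: "(b::real) \<ge> 0 \<Longrightarrow> sinh b \<ge> b/2"
proof -
  assume b: "b \<ge> 0"
  have "exp b \<ge> 1 + b" by (rule exp_ge_add_one_self)
  moreover have "exp (-b) \<le> 1" using b by simp
  ultimately have "b \<le> exp b - exp (-b)" by linarith
  then show ?thesis unfolding sinh_field_def by (simp add: field_simps)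
qed

lemma even_mono:
  assumes "0 < x" "x < y" "L > 0"
  shows "sinh x * ((exp (x*real L) - 1) / (exp (x*real L) + 1)) < sinh y * ((exp (y*real L) - 1) / (exp (y*real L) + 1))"
proof -
  have ex: "exp (x*real L) > 1" using assms by simp
  have exy: "exp (x*real L) < exp (y*real L)" using assms by simp
  have p1: "exp (x*real L) + 1 > 0" "exp (y*real L) + 1 > 0" by (smt (verit) exp_gt_zero)+
  have r0: "(exp (x*real L) - 1) / (exp (x*real L) + 1) > 0" using ex by (smt (verit) divide_pos_pos exp_gt_zero)
  have "(exp (x*real L) - 1) / (exp (x*real L) + 1) = 1 - 2 / (exp (x*real L) + 1)"
    using p1 by (simp add: field_simps)
  moreover have "(exp (y*real L) - 1) / (exp (y*real L) + 1) = 1 - 2 / (exp (y*real L) + 1)"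
    using p1 by (simp add: field_simps)
  moreover have "2 / (exp (y*real L) + 1) \<le> 2 / (exp (x*real L) + 1)"
    using exy p1 by (intro divide_left_mono) (auto intro: mult_pos_pos)
  ultimately have rle: "(exp (x*real L) - 1) / (exp (x*real L) + 1) \<le> (exp (y*real L) - 1) / (exp (y*real L) + 1)"
    by simp
  have "sinh x * ((exp (x*real L) - 1) / (exp (x*real L) + 1)) < sinh y * ((exp (x*real L) - 1) / (exp (x*real L) + 1))"
    using r0 assms by (intro mult_strict_right_mono) auto
  also have "\<dots> \<le> sinh y * ((exp (y*real L) - 1) / (exp (y*real L) + 1))"
    using rle assms by (intro mult_left_mono) auto
  finally show ?thesis .
qed

lemma even_case:
  fixes c u :: real
  assumes c: "c > 0" and u: "u > 0" and L: "L > 0"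
  shows "\<exists>!t. t > 0 \<and> c * sinh t * (exp (t*real L) - 1) = u * (exp (t*real L) + 1)"
proof (rule ex_ex1I)
  define k where "k t = c * sinh t * (exp (t*real L) - 1) - u * (exp (t*real L) + 1)" for t
  define b where "b = 2 + 4*u/c"
  have b2: "b \<ge> 2" unfolding b_def using u c by simp
  have k0: "k 0 \<le> 0" unfolding k_def using u by simp
  have "exp (b * real L) \<ge> exp b" using L b2 by simp
  moreover have "exp b \<ge> 1 + b" by (rule exp_ge_add_one_self)
  ultimately have E3: "exp (b * real L) \<ge> 3" using b2 by linarith
  have "sinh b \<ge> b/2" using b2 by (intro sinh_ge_half) auto
  then have "c * sinh b \<ge> c * (b/2)" using c by (intro mult_left_mono) auto
  moreover have "c * (b/2) \<ge> 2*u" unfolding b_def using c u by (simp add: field_simps)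
  ultimately have cs: "c * sinh b \<ge> 2*u" by linarith
  have "c * sinh b * (exp (b*real L) - 1) \<ge> 2*u * (exp (b*real L) - 1)"
    by (rule mult_right_mono[OF cs]) (use E3 in linarith)
  moreover have "u*3 \<le> u*exp (b*real L)" using E3 u by (intro mult_left_mono) auto
  ultimately have kb: "k b \<ge> 0" unfolding k_def by (simp add: algebra_simps)
  have cont: "continuous_on {0..b} k" unfolding k_def by (intro continuous_intros)
  obtain t where t: "0 \<le> t" "t \<le> b" "k t = 0" using IVT'[of k 0 0 b, OF k0 kb _ cont] b2 by auto
  have "t \<noteq> 0" using t u unfolding k_def by auto
  with t show "\<exists>t. t > 0 \<and> c * sinh t * (exp (t*real L) - 1) = u * (exp (t*real L) + 1)"
    unfolding k_def by (intro exI[of _ t]) auto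
next
  fix x y assume x: "x > 0 \<and> c * sinh x * (exp (x*real L) - 1) = u * (exp (x*real L) + 1)"
    and y: "y > 0 \<and> c * sinh y * (exp (y*real L) - 1) = u * (exp (y*real L) + 1)"
  have g: "c * (sinh t * ((exp (t*real L) - 1) / (exp (t*real L) + 1))) = u"
    if "t > 0 \<and> c * sinh t * (exp (t*real L) - 1) = u * (exp (t*real L) + 1)" for t
  proof -
    have "exp (t*real L) + 1 > 0" by (smt (verit) exp_gt_zero)
    then show ?thesis using that by (simp add: field_simps)
  qed
  show "x = y"
  proof (rule ccontr)
    assume "x \<noteq> y"
    then consider "x < y" | "y < x" by linarith
    then show False
    proof cases
      case 1 
      have "c * (sinh x * ((exp (x*real L) - 1) / (exp (x*real L) + 1))) < c * (sinh y * ((exp (y*real L) - 1) / (exp (y*real L) + 1)))"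
        using even_mono[of x y L] 1 x L c by (intro mult_strict_left_mono) auto
      then show False using g[OF x] g[OF y] by linarith
    next
      case 2
      have "c * (sinh y * ((exp (y*real L) - 1) / (exp (y*real L) + 1))) < c * (sinh x * ((exp (x*real L) - 1) / (exp (x*real L) + 1)))"
        using even_mono[of y x L] 2 y L c by (intro mult_strict_left_mono) auto
      then show False using g[OF x] g[OF y] by linarith
    qed
  qed
qed



lemma odd_deriv:
  assumes t: "t > 0" and L: "L > 0"
  shows "\<exists>D. DERIV (\<lambda>t. sinh t * ((exp (t*real L) + 1) / (exp (t*real L) - 1))) t :> D \<and> D > 0"
proof -
  define E where "E = exp (t*real L)"
  have E1: "E > 1" unfolding E_def using t L by simp
  define D where "D = cosh t * ((E + 1) / (E - 1)) + sinh t * ((real L * E * (E - 1) - (E + 1) * (real L * E)) / (E - 1)^2)"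
  have "DERIV (\<lambda>t. sinh t * ((exp (t*real L) + 1) / (exp (t*real L) - 1))) t :> D"
    unfolding D_def E_def
    apply (rule derivative_eq_intros refl | simp)+
      using t L apply simp
     apply (rule refl)
    apply (simp add: power2_eq_square algebra_simps)
    done
  moreover have "D > 0"
  proof -
    have em: "exp (-(real L*t)) = 1/E" unfolding E_def by (simp add: exp_minus inverse_eq_divide mult.commute)
    have sL: "sinh (real L * t) = (E - 1/E)/2" unfolding sinh_field_def em by (simp add: E_def mult.commute)
    have "sinh (real L * t) \<ge> real L * sinh t" using t by (intro sinh_nat_ge) auto
    moreover have "cosh t > 1" using t cosh_real_ge_1[of t] cosh_real_one_iff[of t] by linarith
    moreover have "real L * sinh t > 0" using t L by simp
    ultimately have A1: "cosh t * sinh (real L * t) \<ge> cosh t * (real L * sinh t)"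
      and A2: "cosh t * (real L * sinh t) > 1 * (real L * sinh t)"
       apply -
       apply (rule mult_left_mono) apply assumption apply simp
      apply (rule mult_strict_right_mono) apply assumption apply assumption
      done
    have EE: "E*E - 1 = 2*E* sinh (real L * t)" unfolding sL using E1 by (simp add: field_simps)
    have "2*E*(cosh t * sinh (real L * t)) > 2*E*(real L * sinh t)"
    proof -
      have "cosh t * sinh (real L * t) > real L * sinh t" using A1 A2 by linarith
      then show ?thesis using E1 by (intro mult_strict_left_mono) auto
    qed
    then have key: "cosh t * (E*E - 1) > 2 * E * real L * sinh t"
      unfolding EE by (simp add: algebra_simps)
    have Em: "E - 1 \<noteq> 0" using E1 by simp
    have q1: "(E + 1) / (E - 1) * (E - 1)^2 = E*E - 1"
    proof -
      have "(E + 1) / (E - 1) * (E - 1)^2 = (E + 1) * ((E - 1) / (E - 1)) * (E - 1)"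
        by (simp add: power2_eq_square)
      also have "\<dots> = (E+1)*(E-1)" using Em by simp
      finally show ?thesis by (simp add: algebra_simps)
    qed
    have q2: "(real L * E * (E - 1) - (E + 1) * (real L * E)) / (E - 1)^2 * (E - 1)^2 = - (2 * E * real L)"
      using Em by (simp add: algebra_simps)
    have "D * (E - 1)^2 = cosh t * ((E + 1) / (E - 1) * (E - 1)^2) + sinh t * ((real L * E * (E - 1) - (E + 1) * (real L * E)) / (E - 1)^2 * (E - 1)^2)"
      unfolding D_def by (simp only: distrib_right mult.assoc)
    also have "\<dots> = cosh t * (E*E - 1) - 2 * E * real L * sinh t"
      unfolding q1 q2 by (simp add: algebra_simps)
    finally have "D * (E - 1)^2 = cosh t * (E*E - 1) - 2 * E * real L * sinh t" .
    with key have "D * (E - 1)^2 > 0" by simp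
    then show ?thesis using E1 by (simp add: zero_less_mult_iff)
  qed
  ultimately show ?thesis by blast
qed
lemma odd_mono:
  assumes "0 < x" "x < y" "L > 0"
  shows "sinh x * ((exp (x*real L) + 1) / (exp (x*real L) - 1)) < sinh y * ((exp (y*real L) + 1) / (exp (y*real L) - 1))"
  using DERIV_pos_imp_increasing[of x y "\<lambda>t. sinh t * ((exp (t*real L) + 1) / (exp (t*real L) - 1))"]
    odd_deriv assms by force

lemma odd_case:
  fixes c u :: real
  assumes c: "c > 0" and u: "u > 0" and L: "L > 0" and uL: "u * real L > 2 * c"
  shows "\<exists>!t. t > 0 \<and> c * sinh t * (exp (t*real L) + 1) = u * (exp (t*real L) - 1)"
proof (rule ex_ex1I)
  define k where "k t = c * sinh t * (exp (t*real L) + 1) - u * (exp (t*real L) - 1)" for t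
  have "DERIV k 0 :> 2*c - u * real L"
    unfolding k_def
    apply (rule derivative_eq_intros refl | simp)+
    done
  from DERIV_neg_dec_right[OF this] uL obtain d where d: "d > 0" "\<forall>h > 0. h < d \<longrightarrow> k 0 > k (0 + h)"
    by auto
  define a where "a = d/2"
  have a0: "a > 0" "a < d" using d unfolding a_def by auto
  have "k 0 > k (0 + a)" using d(2) a0 by blast
  moreover have "k 0 = 0" unfolding k_def by simp
  ultimately have a: "a > 0" "k a < 0" using a0 by auto
  define b where "b = a + 2*u/c"
  have ab: "a \<le> b" unfolding b_def using u c by simp
  have "sinh b \<ge> b/2" using ab a by (intro sinh_ge_half) auto
  then have "c * sinh b \<ge> c * (b/2)" using c by (intro mult_left_mono) auto
  moreover have "c * (b/2) \<ge> u" unfolding b_def using c u a by (simp add: field_simps)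
  ultimately have cs: "c * sinh b \<ge> u" by linarith
  have "c * sinh b * (exp (b*real L) + 1) \<ge> u * (exp (b*real L) + 1)"
    by (rule mult_right_mono[OF cs]) (smt (verit) exp_gt_zero)
  then have kb: "k b \<ge> 0" unfolding k_def using u by (simp add: algebra_simps)
  have cont: "continuous_on {a..b} k" unfolding k_def by (intro continuous_intros)
  obtain t where t: "a \<le> t" "t \<le> b" "k t = 0" using IVT'[of k a 0 b, OF _ kb ab cont] a by auto
  with a show "\<exists>t. t > 0 \<and> c * sinh t * (exp (t*real L) + 1) = u * (exp (t*real L) - 1)"
    unfolding k_def by (intro exI[of _ t]) auto
next
  fix x y assume x: "x > 0 \<and> c * sinh x * (exp (x*real L) + 1) = u * (exp (x*real L) - 1)"
    and y: "y > 0 \<and> c * sinh y * (exp (y*real L) + 1) = u * (exp (y*real L) - 1)"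
  have g: "c * (sinh t * ((exp (t*real L) + 1) / (exp (t*real L) - 1))) = u"
    if "t > 0 \<and> c * sinh t * (exp (t*real L) + 1) = u * (exp (t*real L) - 1)" for t
  proof -
    have E: "exp (t*real L) - 1 \<noteq> 0" using that L by simp
    have "c * (sinh t * ((exp (t*real L) + 1) / (exp (t*real L) - 1))) = (c * sinh t * (exp (t*real L) + 1)) / (exp (t*real L) - 1)"
      by simp
    also have "\<dots> = u * (exp (t*real L) - 1) / (exp (t*real L) - 1)" using that by simp
    also have "\<dots> = u" using E by simp
    finally show ?thesis .
  qed
  show "x = y"
  proof (rule ccontr)
    assume "x \<noteq> y"
    then consider "x < y" | "y < x" by linarith
    then show False
    proof cases
      case 1 
      have "c * (sinh x * ((exp (x*real L) + 1) / (exp (x*real L) - 1))) < c * (sinh y * ((exp (y*real L) + 1) / (exp (y*real L) - 1)))"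
        using odd_mono[of x y L] 1 x L c by (intro mult_strict_left_mono) auto
      then show False using g[OF x] g[OF y] by linarith
    next
      case 2
      have "c * (sinh y * ((exp (y*real L) + 1) / (exp (y*real L) - 1))) < c * (sinh x * ((exp (x*real L) + 1) / (exp (x*real L) - 1)))"
        using odd_mono[of y x L] 2 y L c by (intro mult_strict_left_mono) auto
      then show False using g[OF x] g[OF y] by linarith
    qed
  qed
qed



lemma sol_unique:
  fixes C cq u :: real
  assumes C: "C = 1 \<or> C = -1" and cq: "cq < 0" "cq \<ge> -1" and u: "u > 0" and L: "L > 0" and uL: "u * real L > 2"
  shows "\<exists>!t. t > 0 \<and> cq * sinh t * (1 - C * exp (t*real L)) = u * (1 + C * exp (t*real L))"
  using C
proof
  assume C1: "C = 1"
  have "\<And>t. (cq * sinh t * (1 - C * exp (t*real L)) = u * (1 + C * exp (t*real L))) \<longleftrightarrow>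
     ((-cq) * sinh t * (exp (t*real L) - 1) = u * (exp (t*real L) + 1))"
    unfolding C1 by (simp add: algebra_simps; argo)
  with even_case[of "-cq" u L] cq u L show ?thesis by simp
next
  assume C1: "C = -1"
  have "\<And>t. (cq * sinh t * (1 - C * exp (t*real L)) = u * (1 + C * exp (t*real L))) \<longleftrightarrow>
     ((-cq) * sinh t * (exp (t*real L) + 1) = u * (exp (t*real L) - 1))"
    unfolding C1 by (simp add: algebra_simps; argo)
  moreover have "u * real L > 2 * (-cq)" using uL cq by linarith
  ultimately show ?thesis using odd_case[of "-cq" u L] cq u L by simp
qed

lemma cos_neg_range:
  assumes "0 \<le> q" "q < 2*pi" "cos q < 0"
  shows "pi/2 < q \<and> q < 3*pi/2"
proof (rule ccontr)
  assume "\<not> (pi/2 < q \<and> q < 3*pi/2)"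
  then consider "q \<le> pi/2" | "q \<ge> 3*pi/2" by linarith
  then show False
  proof cases
    case 1 then have "cos q \<ge> 0" using assms by (intro cos_ge_zero) auto
    then show False using assms by simp
  next
    case 2 then have "cos (q - 2*pi) \<ge> 0" using assms by (intro cos_ge_zero) auto
    moreover have "cos (q - 2*pi) = cos q" by (simp add: cos_diff)
    ultimately show False using assms by simp
  qed
qed

lemma sinq_C: "sin (x::real) = 0 \<Longrightarrow> cos x = 1 \<or> cos x = -1"
proof -
  assume "sin x = 0"
  then have "cos x * cos x = 1" using sin_cos_squared_add[of x] by (simp add: power2_eq_square)
  then have "(cos x - 1) * (cos x + 1) = 0" by (simp add: algebra_simps)
  then show ?thesis by (smt (verit) mult_eq_0_iff)
qed



theorem mainTheorem3:
  fixes L :: nat and U :: real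
  assumes "L > 0" and "U > 0" and "real L > 8 / U"
  shows "(\<forall>q xi Lam. (q, xi, Lam) \<in> two_strings L U \<longrightarrow>
            pi / 2 < q \<and> q < 3 * pi / 2 \<and> (\<exists>m::int. q = of_int m * pi / real L))
       \<and> (\<forall>m::int. pi / 2 < of_int m * pi / real L \<and> of_int m * pi / real L < 3 * pi / 2 \<longrightarrow>
            (\<exists>!p. (of_int m * pi / real L, fst p, snd p) \<in> two_strings L U))
       \<and> finite (two_strings L U)
       \<and> card (two_strings L U) = (if odd L then L else L - 1)"
proof -
  note L = assms(1) and U = assms(2)
  have Lr: "real L > 0" using L by simp
  have uL: "U/4 * real L > 2"
  proof -
    have "8 / U * U < real L * U" using assms(3) U by (intro mult_strict_right_mono) auto
    then show ?thesis using U by (simp add: field_simps)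
  qed
  have mem: "(q, xi, Lam) \<in> two_strings L U \<longleftrightarrow> 0 \<le> q \<and> q < 2*pi \<and> xi > 0 \<and> sin (q*L) = 0 \<and> Lam = sin q * cosh xi \<and>
        cos q * sinh xi * (1 - cos (q*L) * exp (xi*L)) = U/4 * (1 + cos (q*L) * exp (xi*L))" for q xi Lam
    unfolding two_strings_def using char[of xi U L q Lam] U L by auto
  have P1: "pi / 2 < q \<and> q < 3 * pi / 2 \<and> (\<exists>m::int. q = of_int m * pi / real L)"
    if "(q, xi, Lam) \<in> two_strings L U" for q xi Lam
  proof -
    from that have q: "0 \<le> q" "q < 2*pi" and xi: "xi > 0" and s: "sin (q*L) = 0"
      and eq: "cos q * sinh xi * (1 - cos (q*L) * exp (xi*L)) = U/4 * (1 + cos (q*L) * exp (xi*L))"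
      unfolding mem by auto
    from s obtain m :: int where m: "q * L = of_int m * pi" using sin_zero_iff_int2 by blast
    then have qm: "q = of_int m * pi / real L" using Lr by (simp add: field_simps)
    have P: "exp (xi * L) > 1" using xi Lr by simp
    have "cos q < 0"
    proof (rule ccontr)
      assume "\<not> cos q < 0"
      then have b: "cos q * sinh xi \<ge> 0" using xi by simp
      from sinq_C[OF s] show False
      proof
        assume C: "cos (q*L) = 1"
        have "cos q * sinh xi * (1 - cos (q*L) * exp (xi*L)) \<le> 0"
          unfolding C by (rule mult_nonneg_nonpos[OF b]) (use P in simp)
        moreover have "U/4 * (1 + cos (q*L) * exp (xi*L)) > 0" using U P unfolding C by (intro mult_pos_pos) (auto simp: add_pos_pos)
        ultimately show False using eq by linarith
      next
        assume C: "cos (q*L) = -1"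
        have "cos q * sinh xi * (1 - cos (q*L) * exp (xi*L)) \<ge> 0"
          unfolding C by (rule mult_nonneg_nonneg[OF b]) (use P in simp)
        moreover have "U/4 * (1 + cos (q*L) * exp (xi*L)) < 0" using U P unfolding C by (intro mult_pos_neg) auto
        ultimately show False using eq by linarith
      qed
    qed
    with q cos_neg_range have "pi/2 < q \<and> q < 3*pi/2" by blast
    with qm show ?thesis by blast
  qed
  have P2: "\<exists>!p. (of_int m * pi / real L, fst p, snd p) \<in> two_strings L U"
    if m: "pi / 2 < of_int m * pi / real L \<and> of_int m * pi / real L < 3 * pi / 2" for m :: int
  proof -
    define q where "q = of_int m * pi / real L"
    have qr: "0 \<le> q" "q < 2*pi" "pi/2 < q" "q < 3*pi/2" using m pi_gt_zero unfolding q_def by linarith+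
    have cq: "cos q < 0" "cos q \<ge> -1" using cos_lt_zero_pi qr by auto
    have "q * L = of_int m * pi" unfolding q_def using Lr by simp
    then have s: "sin (q*L) = 0" by (simp add: sin_zero_iff_int2)
    from sol_unique[OF sinq_C[OF s] cq _ L] uL U obtain t where
      t: "t > 0 \<and> cos q * sinh t * (1 - cos (q*L) * exp (t*L)) = U/4 * (1 + cos (q*L) * exp (t*L))"
      and tu: "\<And>t'. t' > 0 \<and> cos q * sinh t' * (1 - cos (q*L) * exp (t'*L)) = U/4 * (1 + cos (q*L) * exp (t'*L)) \<Longrightarrow> t' = t"
      by (metis divide_pos_pos zero_less_numeral)
    show ?thesis unfolding q_def[symmetric]
    proof (rule ex1I[of _ "(t, sin q * cosh t)"])
      show "(q, fst (t, sin q * cosh t), snd (t, sin q * cosh t)) \<in> two_strings L U"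
        unfolding mem using qr s t by simp
    next
      fix p assume "(q, fst p, snd p) \<in> two_strings L U"
      then have "fst p > 0 \<and> cos q * sinh (fst p) * (1 - cos (q*L) * exp (fst p*L)) = U/4 * (1 + cos (q*L) * exp (fst p*L))"
        and "snd p = sin q * cosh (fst p)"
        unfolding mem by auto
      with tu show "p = (t, sin q * cosh t)" by (metis prod.collapse)
    qed
  qed
  define M where "M = {m::int. pi / 2 < of_int m * pi / real L \<and> of_int m * pi / real L < 3 * pi / 2}"
  define f where "f m = (of_int m * pi / real L, fst (THE p. (of_int m * pi / real L, fst p, snd p) \<in> two_strings L U),
      snd (THE p. (of_int m * pi / real L, fst p, snd p) \<in> two_strings L U))" for m :: int
  have TS: "two_strings L U = f ` M"
  proof
    show "two_strings L U \<subseteq> f ` M"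
    proof
      fix x assume x: "x \<in> two_strings L U"
      obtain q xi Lam where xe: "x = (q, xi, Lam)" by (cases x) auto
      have p1: "pi / 2 < q \<and> q < 3 * pi / 2 \<and> (\<exists>m::int. q = of_int m * pi / real L)"
        using P1[of q xi Lam] x xe by blast
      then obtain m :: int where mq: "q = of_int m * pi / real L" by blast
      have "m \<in> M" using p1 unfolding M_def mq by blast
      note m = mq this
      have "(THE p. (of_int m * pi / real L, fst p, snd p) \<in> two_strings L U) = (xi, Lam)"
        using P2[of m] m x xe unfolding M_def by (intro the1_equality) auto
      then have "x = f m" unfolding f_def xe m by simp
      with m show "x \<in> f ` M" by blast
    qed
  next
    show "f ` M \<subseteq> two_strings L U"
    proof
      fix x assume "x \<in> f ` M"
      then obtain m where m: "m \<in> M" "x = f m" by blast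
      from theI'[OF P2[of m]] m show "x \<in> two_strings L U" unfolding f_def M_def by simp
    qed
  qed
  have inj: "inj_on f M"
  proof
    fix a b assume "a \<in> M" "b \<in> M" "f a = f b"
    then have "of_int a * pi / real L = of_int b * pi / real L" unfolding f_def by simp
    then show "a = b" using Lr by (simp add: field_simps)
  qed
  have Mi: "M = {int L div 2 + 1 ..< (3 * int L + 1) div 2}"
  proof -
    have iff: "m \<in> M \<longleftrightarrow> int L < 2*m \<and> 2*m < 3 * int L" for m
    proof -
      have e: "of_int m * pi / real L = (of_int m / real L) * pi" by simp
      have "pi / 2 < of_int m * pi / real L \<longleftrightarrow> 1/2 < of_int m / real L"
        unfolding e using pi_gt_zero by (metis mult_less_cancel_right_pos times_divide_eq_left mult_1)
      also have "\<dots> \<longleftrightarrow> real L < 2 * of_int m" using Lr by (simp add: field_simps)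
      also have "\<dots> \<longleftrightarrow> int L < 2*m" by linarith
      finally have A: "pi / 2 < of_int m * pi / real L \<longleftrightarrow> int L < 2*m" .
      have "of_int m * pi / real L < 3 * pi / 2 \<longleftrightarrow> of_int m / real L < 3/2"
        unfolding e using pi_gt_zero by (metis mult_less_cancel_right_pos times_divide_eq_left)
      also have "\<dots> \<longleftrightarrow> 2 * of_int m < 3 * real L" using Lr by (simp add: field_simps)
      also have "\<dots> \<longleftrightarrow> 2*m < 3 * int L" by linarith
      finally have B: "of_int m * pi / real L < 3 * pi / 2 \<longleftrightarrow> 2*m < 3 * int L" .
      show ?thesis unfolding M_def using A B by simp
    qed
    show ?thesis by (auto simp: iff)
  qed
  have fin: "finite M" unfolding Mi by simp
  have "card (two_strings L U) = card M" unfolding TS using inj by (simp add: card_image)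
  also have "\<dots> = (if odd L then L else L - 1)"
  proof (cases "even L")
    case True
    then obtain k where k: "L = 2*k" by blast
    with L have "k \<ge> 1" by simp
    then show ?thesis using k by (simp add: Mi)
  next
    case False
    then obtain k where k: "L = 2*k+1" using oddE by blast
    then show ?thesis by (simp add: Mi)
  qed
  finally have card: "card (two_strings L U) = (if odd L then L else L - 1)" .
  show ?thesis using P1 P2 fin card TS by auto
qed


end
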